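(* For $\alpha\in\mathbb{K}^\times$ let $A_{2,\alpha}$ be the evolution algebra over the field $\mathbb{K}$ with natural basis $\{e_1,e_2\}$ such that $e_1^2=e_2$ and $e_2^2=\alpha e_1$. For $\alpha,\alpha'\in\mathbb{K}^\times$, $A_{2,\alpha}$ is isomorphic to $A_{2,\alpha'}$ as a $\mathbb{K}$-algebra if and only if $\overline\alpha=\overline{\alpha'}$ or $\overline\alpha=\overline{\alpha'}^2$, where classes are taken in $G_3=\mathbb{K}^\times/(\mathbb{K}^\times)^3$.
   Context: An evolution algebra over $\mathbb{K}$ is a $\mathbb{K}$-algebra with a basis $\{e_i\}$ (natural basis) such that $e_ie_j=0$ for $i\neq j$. $\overline\rho$ denotes the class of $\rho\in\mathbb{K}^\times$ in $G_3$. *)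

theory Defs
  imports Main
begin

text \<open>The 2-dimensional evolution algebra A_{2,alpha}, realised on K x K with
  e1 = (1,0), e2 = (0,1): e1 e1 = e2, e2 e2 = alpha e1, e1 e2 = e2 e1 = 0,
  extended bilinearly.\<close>
definition evo_mult :: "'a::field \<Rightarrow> 'a \<times> 'a \<Rightarrow> 'a \<times> 'a \<Rightarrow> 'a \<times> 'a" where
  "evo_mult \<alpha> u v = (\<alpha> * snd u * snd v, fst u * fst v)"

definition klinear :: "('a::field \<times> 'a \<Rightarrow> 'a \<times> 'a) \<Rightarrow> bool" where
  "klinear f \<longleftrightarrow> (\<forall>u v. f (fst u + fst v, snd u + snd v) =
                       (fst (f u) + fst (f v), snd (f u) + snd (f v))) \<and>
                   (\<forall>c u. f (c * fst u, c * snd u) = (c * fst (f u), c * snd (f u)))"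

definition evo_iso :: "'a::field \<Rightarrow> 'a \<Rightarrow> bool" where
  "evo_iso \<alpha> \<alpha>' \<longleftrightarrow> (\<exists>f. bij f \<and> klinear f \<and>
      (\<forall>u v. f (evo_mult \<alpha> u v) = evo_mult \<alpha>' (f u) (f v)))"

definition same_class3 :: "'a::field \<Rightarrow> 'a \<Rightarrow> bool" where
  "same_class3 a b \<longleftrightarrow> (\<exists>c. c \<noteq> 0 \<and> a = b * c ^ 3)"

end

theory Submission
  imports Defs
begin

lemma fwd:
  fixes \<alpha> \<alpha>' :: "'a::field"
  assumes "\<alpha> \<noteq> 0" and "\<alpha>' \<noteq> 0" and "evo_iso \<alpha> \<alpha>'"
  shows "same_class3 \<alpha> \<alpha>' \<or> same_class3 \<alpha> (\<alpha>' ^ 2)"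
proof -
  obtain f where bf: "bij f" and lf: "klinear f"
    and mf: "\<forall>u v. f (evo_mult \<alpha> u v) = evo_mult \<alpha>' (f u) (f v)"
    using assms(3) unfolding evo_iso_def by blast
  have sc: "\<And>c u. f (c * fst u, c * snd u) = (c * fst (f u), c * snd (f u))"
    using lf unfolding klinear_def by blast
  obtain a b where ab: "f (1,0) = (a,b)" by (cases "f (1,0)") auto
  obtain c d where cd: "f (0,1) = (c,d)" by (cases "f (0,1)") auto
  have z: "f (0,0) = (0,0)" using sc[of 0 "(0,0)"] by simp
  have sa: "f (x,0) = (x*a, x*b)" for x using sc[of x "(1,0)"] ab by simp
  have "f (1,0) \<noteq> f (0,0)" using bf unfolding bij_def inj_def by force
  hence abn: "a \<noteq> 0 \<or> b \<noteq> 0" using ab z by auto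
  have e11: "f (0,1) = (\<alpha>' * b * b, a * a)"
    using spec[OF spec[OF mf, of "(1,0)"], of "(1,0)"] ab by (simp add: evo_mult_def)
  have e22: "f (\<alpha>,0) = (\<alpha>' * d * d, c * c)"
    using spec[OF spec[OF mf, of "(0,1)"], of "(0,1)"] cd by (simp add: evo_mult_def)
  have e12: "(0,0) = (\<alpha>' * b * d, a * c)"
    using spec[OF spec[OF mf, of "(1,0)"], of "(0,1)"] ab cd z by (simp add: evo_mult_def)
  have c1: "c = \<alpha>' * b * b" "d = a * a" using e11 cd by auto
  have c2: "\<alpha> * a = \<alpha>' * d * d" "\<alpha> * b = c * c" using e22 sa[of \<alpha>] by auto
  show ?thesis
  proof (cases "b = 0")
    case True
    hence an: "a \<noteq> 0" using abn by simp
    have "\<alpha> * a = \<alpha>' * a^3 * a" using c2 c1 by (simp add: power3_eq_cube algebra_simps)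
    hence "\<alpha> = \<alpha>' * a^3" using an by simp
    thus ?thesis using an unfolding same_class3_def by blast
  next
    case False
    hence "c \<noteq> 0" using c1 assms(2) by simp
    hence "a = 0" using e12 by simp
    hence "\<alpha> * b = (\<alpha>'^2 * b^3) * b" using c2 c1 by (simp add: power3_eq_cube power2_eq_square algebra_simps)
    hence "\<alpha> = \<alpha>'^2 * b^3" using False by simp
    thus ?thesis using False unfolding same_class3_def by blast
  qed
qed

lemma bwd1:
  fixes \<alpha> \<alpha>' :: "'a::field"
  assumes "c \<noteq> 0" and "\<alpha> = \<alpha>' * c ^ 3"
  shows "evo_iso \<alpha> \<alpha>'"
proof -
  define f where "f = (\<lambda>(x::'a,y::'a). (c*x, c*c*y))"
  define g where "g = (\<lambda>(x::'a,y::'a). (x/c, y/(c*c)))"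
  have "bij f"
    by (rule bij_betw_byWitness[where f'=g]) (auto simp: f_def g_def assms(1))
  moreover have "klinear f" unfolding klinear_def f_def by (auto simp: algebra_simps)
  moreover have "\<forall>u v. f (evo_mult \<alpha> u v) = evo_mult \<alpha>' (f u) (f v)"
    by (auto simp: f_def evo_mult_def assms(2) power3_eq_cube algebra_simps)
  ultimately show ?thesis unfolding evo_iso_def by blast
qed

lemma bwd2:
  fixes \<alpha> \<alpha>' :: "'a::field"
  assumes "c \<noteq> 0" "\<alpha>' \<noteq> 0" and "\<alpha> = \<alpha>'^2 * c ^ 3"
  shows "evo_iso \<alpha> \<alpha>'"
proof -
  define f where "f = (\<lambda>(x::'a,y::'a). (\<alpha>'*c*c*y, c*x))"
  define g where "g = (\<lambda>(x::'a,y::'a). (y/c, x/(\<alpha>'*c*c)))"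
  have "bij f"
    by (rule bij_betw_byWitness[where f'=g]) (auto simp: f_def g_def assms(1,2))
  moreover have "klinear f" unfolding klinear_def f_def by (auto simp: algebra_simps)
  moreover have "\<forall>u v. f (evo_mult \<alpha> u v) = evo_mult \<alpha>' (f u) (f v)"
    by (auto simp: f_def evo_mult_def assms(3) power3_eq_cube power2_eq_square algebra_simps)
  ultimately show ?thesis unfolding evo_iso_def by blast
qed

theorem lemma3p3:
  fixes \<alpha> \<alpha>' :: "'a::field"
  assumes "\<alpha> \<noteq> 0" and "\<alpha>' \<noteq> 0"
  shows "evo_iso \<alpha> \<alpha>' \<longleftrightarrow> (same_class3 \<alpha> \<alpha>' \<or> same_class3 \<alpha> (\<alpha>' ^ 2))"
  using fwd[OF assms] bwd1 bwd2[OF _ assms(2)] unfolding same_class3_def by blast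

end
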